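(* For all $u\in R(F,H)$ and $x\in R(E)$, \[ x\bullet u^\eta=[x,u]^\eta, \] where $[x,u]=xu-ux$.
   Context: Let $f\in\mathbb{C}[H]$ be a polynomial. $R=R(f)$ is the associative $\mathbb{C}$-algebra generated by $E,F,H$ with relations $EF-FE=f(H)$, $HE-EH=E$, $HF-FH=-F$; the monomials $F^iH^jE^k$ form a basis of $R$. Let $R(E)=\mathbb{C}[E]$ and $R(F,H)$ the subalgebra generated by $F,H$. Fix an algebra homomorphism $\eta:R(E)\to\mathbb{C}$ with $\eta(E)\neq0$ and let $R_\eta(E)=\ker\eta$. Then $R=R(F,H)\oplus R\,R_\eta(E)$ as vector spaces; for $u\in R$, $u^\eta$ denotes its $R(F,H)$-component. The $\eta$-reduced action of $R(E)$ on $R(F,H)$ is $x\bullet v=(xv)^\eta-\eta(x)v$ for $x\in R(E)$, $v\in R(F,H)$. *)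

theory Defs
  imports "HOL-Computational_Algebra.Polynomial"
begin

text \<open>A complex algebra is modelled as a ring 'a together with a unital ring
homomorphism c from the complex numbers into the centre of 'a; scalar
multiplication by z is left multiplication by c z.\<close>

definition polyR :: "(complex \<Rightarrow> 'a::ring_1) \<Rightarrow> complex poly \<Rightarrow> 'a \<Rightarrow> 'a" where
  "polyR c p x = (\<Sum>i\<le>degree p. c (coeff p i) * x ^ i)"

definition monoFHE :: "'a::ring_1 \<Rightarrow> 'a \<Rightarrow> 'a \<Rightarrow> nat \<times> nat \<times> nat \<Rightarrow> 'a" where
  "monoFHE F H E m = (case m of (i, j, k) \<Rightarrow> F ^ i * H ^ j * E ^ k)"

definition R_alg :: "(complex \<Rightarrow> 'a::ring_1) \<Rightarrow> complex poly \<Rightarrow> 'a \<Rightarrow> 'a \<Rightarrow> 'a \<Rightarrow> bool" where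
  "R_alg c f E F H \<longleftrightarrow>
     c 1 = 1 \<and> (\<forall>a b. c (a + b) = c a + c b) \<and> (\<forall>a b. c (a * b) = c a * c b) \<and>
     (\<forall>a x. c a * x = x * c a) \<and>
     E * F - F * E = polyR c f H \<and> H * E - E * H = E \<and> H * F - F * H = - F \<and>
     (\<forall>r. \<exists>!a :: nat \<times> nat \<times> nat \<Rightarrow> complex. finite {m. a m \<noteq> 0} \<and>
            r = (\<Sum>m\<in>{m. a m \<noteq> 0}. c (a m) * monoFHE F H E m))"

inductive_set subalg :: "(complex \<Rightarrow> 'a::ring_1) \<Rightarrow> 'a set \<Rightarrow> 'a set"
  for c :: "complex \<Rightarrow> 'a" and G :: "'a set" where
  scal: "c a \<in> subalg c G"
| gen: "g \<in> G \<Longrightarrow> g \<in> subalg c G"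
| add: "x \<in> subalg c G \<Longrightarrow> y \<in> subalg c G \<Longrightarrow> x + y \<in> subalg c G"
| mult: "x \<in> subalg c G \<Longrightarrow> y \<in> subalg c G \<Longrightarrow> x * y \<in> subalg c G"

inductive_set left_ideal :: "'a::ring_1 set \<Rightarrow> 'a set" for Y :: "'a set" where
  zero: "0 \<in> left_ideal Y"
| prod: "y \<in> Y \<Longrightarrow> r * y \<in> left_ideal Y"
| add: "x \<in> left_ideal Y \<Longrightarrow> z \<in> left_ideal Y \<Longrightarrow> x + z \<in> left_ideal Y"

definition alg_hom_on :: "(complex \<Rightarrow> 'a::ring_1) \<Rightarrow> 'a set \<Rightarrow> ('a \<Rightarrow> complex) \<Rightarrow> bool" where
  "alg_hom_on c S eta \<longleftrightarrow> (\<forall>a. eta (c a) = a) \<and>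
     (\<forall>x\<in>S. \<forall>y\<in>S. eta (x + y) = eta x + eta y \<and> eta (x * y) = eta x * eta y)"

definition ker_eta :: "(complex \<Rightarrow> 'a::ring_1) \<Rightarrow> 'a \<Rightarrow> ('a \<Rightarrow> complex) \<Rightarrow> 'a set" where
  "ker_eta c E eta = {x \<in> subalg c {E}. eta x = 0}"

text \<open>u^eta: the R(F,H)-component of u w.r.t. R = R(F,H) + R R_eta(E).\<close>
definition eta_proj :: "(complex \<Rightarrow> 'a::ring_1) \<Rightarrow> 'a \<Rightarrow> 'a \<Rightarrow> 'a \<Rightarrow> ('a \<Rightarrow> complex) \<Rightarrow> 'a \<Rightarrow> 'a" where
  "eta_proj c E F H eta u =
     (THE v. v \<in> subalg c {F, H} \<and> u - v \<in> left_ideal (ker_eta c E eta))"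

definition eta_act :: "(complex \<Rightarrow> 'a::ring_1) \<Rightarrow> 'a \<Rightarrow> 'a \<Rightarrow> 'a \<Rightarrow> ('a \<Rightarrow> complex) \<Rightarrow> 'a \<Rightarrow> 'a \<Rightarrow> 'a" where
  "eta_act c E F H eta x v = eta_proj c E F H eta (x * v) - c (eta x) * v"

end

theory Submission
  imports Defs
begin

inductive_set spanFH :: "(complex \<Rightarrow> 'a::ring_1) \<Rightarrow> 'a \<Rightarrow> 'a \<Rightarrow> 'a set"
  for c :: "complex \<Rightarrow> 'a" and F H :: 'a where
  sp_zero: "0 \<in> spanFH c F H"
| sp_mono: "c a * (F ^ i * H ^ j) \<in> spanFH c F H"
| sp_add: "x \<in> spanFH c F H \<Longrightarrow> y \<in> spanFH c F H \<Longrightarrow> x + y \<in> spanFH c F H"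

definition linc :: "(complex \<Rightarrow> 'a::ring_1) \<Rightarrow> ('b \<Rightarrow> 'a) \<Rightarrow> ('b \<Rightarrow> complex) \<Rightarrow> 'a" where
  "linc c G a = (\<Sum>m\<in>{m. a m \<noteq> 0}. c (a m) * G m)"

locale RA =
  fixes c :: "complex \<Rightarrow> 'a::ring_1" and f :: "complex poly"
    and E F H :: 'a and eta :: "'a \<Rightarrow> complex"
  assumes R: "R_alg c f E F H"
    and hom: "alg_hom_on c (subalg c {E}) eta"
begin

lemma c1: "c 1 = 1" using R unfolding R_alg_def by blast
lemma c_add: "c (a + b) = c a + c b" using R unfolding R_alg_def by blast
lemma c_mult: "c (a * b) = c a * c b" using R unfolding R_alg_def by blast
lemma c_central: "c a * x = x * c a" using R unfolding R_alg_def by blast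
lemma c0: "c 0 = 0"
  using c_add[of 0 0] by simp
lemma c_neg: "c (- a) = - c a"
  using c_add[of a "-a"] c0 by (simp add: eq_neg_iff_add_eq_0 add.commute)
lemma c_diff: "c (a - b) = c a - c b"
  using c_add[of a "-b"] c_neg[of b] by simp
lemma c_m1: "c (-1) = -1" using c_neg[of 1] c1 by simp
lemma cc: "c a * (c b * X) = c (a * b) * X" by (simp add: c_mult mult.assoc)
lemma rel_HF: "H * F = F * H - F" using R by (simp add: R_alg_def algebra_simps)

lemma eta_c: "eta (c a) = a" using hom by (simp add: alg_hom_on_def)
lemma eta_add: "x \<in> subalg c {E} \<Longrightarrow> y \<in> subalg c {E} \<Longrightarrow> eta (x + y) = eta x + eta y"
  using hom by (simp add: alg_hom_on_def)
lemma eta_mult: "x \<in> subalg c {E} \<Longrightarrow> y \<in> subalg c {E} \<Longrightarrow> eta (x * y) = eta x * eta y"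
  using hom by (simp add: alg_hom_on_def)

abbreviation "B \<equiv> monoFHE F H E"
abbreviation "e \<equiv> eta E"
definition G :: "nat \<times> nat \<times> nat \<Rightarrow> 'a" where
  "G m = c (e ^ snd (snd m)) * (F ^ fst m * H ^ fst (snd m))"

lemma linc_superset:
  assumes "finite A" "{m. a m \<noteq> 0} \<subseteq> A"
  shows "(\<Sum>m\<in>A. c (a m) * K m) = linc c K a"
  unfolding linc_def
  by (rule sum.mono_neutral_right) (use assms c0 in auto)

lemma linc_add:
  assumes "finite {m. a m \<noteq> 0}" "finite {m. b m \<noteq> 0}"
  shows "linc c K (\<lambda>m. a m + b m) = linc c K a + linc c K b"
proof -
  let ?A = "{m. a m \<noteq> 0} \<union> {m. b m \<noteq> 0}"
  have fA: "finite ?A" using assms by simp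
  have "linc c K (\<lambda>m. a m + b m) = (\<Sum>m\<in>?A. c (a m + b m) * K m)"
    by (rule linc_superset[symmetric]) (use fA in auto)
  also have "\<dots> = (\<Sum>m\<in>?A. c (a m) * K m) + (\<Sum>m\<in>?A. c (b m) * K m)"
    by (simp add: c_add distrib_right sum.distrib)
  also have "\<dots> = linc c K a + linc c K b"
    using fA by (simp add: linc_superset)
  finally show ?thesis .
qed

lemma linc_smult:
  assumes "finite {m. a m \<noteq> 0}"
  shows "linc c K (\<lambda>m. z * a m) = c z * linc c K a"
proof -
  have "linc c K (\<lambda>m. z * a m) = (\<Sum>m\<in>{m. a m \<noteq> 0}. c (z * a m) * K m)"
    by (rule linc_superset[symmetric]) (use assms in auto)
  also have "\<dots> = c z * linc c K a"
    by (simp add: linc_def c_mult sum_distrib_left mult.assoc)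
  finally show ?thesis .
qed

lemma basis_all: "\<forall>r. \<exists>!a. finite {m. a m \<noteq> 0} \<and> r = linc c B a"
  using R unfolding R_alg_def linc_def by (elim conjE)

lemma basis: "\<exists>!a. finite {m. a m \<noteq> 0} \<and> r = linc c B a"
  using basis_all by (rule spec)

definition coord :: "'a \<Rightarrow> nat \<times> nat \<times> nat \<Rightarrow> complex" where
  "coord r = (THE a. finite {m. a m \<noteq> 0} \<and> r = linc c B a)"

lemma coord_spec: "finite {m. coord r m \<noteq> 0} \<and> r = linc c B (coord r)"
  unfolding coord_def by (rule theI'[OF basis])

lemma coord_linc: "finite {m. a m \<noteq> 0} \<Longrightarrow> coord (linc c B a) = a"
  unfolding coord_def by (rule the1_equality[OF basis]) auto

lemma coord_add: "coord (r + s) = (\<lambda>m. coord r m + coord s m)"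
proof -
  have fin: "finite {m. coord r m + coord s m \<noteq> 0}"
    by (rule finite_subset[of _ "{m. coord r m \<noteq> 0} \<union> {m. coord s m \<noteq> 0}"])
       (use coord_spec[THEN conjunct1] in auto)
  have "r + s = linc c B (\<lambda>m. coord r m + coord s m)"
    apply (subst linc_add)
     apply (rule coord_spec[THEN conjunct1])+
    by (rule arg_cong2[where f="(+)"]; rule coord_spec[THEN conjunct2])
  then show ?thesis using coord_linc[OF fin] by simp
qed

lemma coord_smult: "coord (c z * r) = (\<lambda>m. z * coord r m)"
proof -
  have fin: "finite {m. z * coord r m \<noteq> 0}"
    by (rule finite_subset[of _ "{m. coord r m \<noteq> 0}"]) (use coord_spec[THEN conjunct1] in auto)
  have "c z * r = linc c B (\<lambda>m. z * coord r m)"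
    apply (subst linc_smult)
    apply (rule coord_spec[THEN conjunct1])
    by (rule arg_cong[OF coord_spec[THEN conjunct2]])
  then show ?thesis using coord_linc[OF fin] by simp
qed

definition phi :: "'a \<Rightarrow> 'a" where "phi r = linc c G (coord r)"

lemma phi_add: "phi (r + s) = phi r + phi s"
  unfolding phi_def coord_add by (rule linc_add) (use coord_spec[THEN conjunct1] in auto)

lemma phi_smult: "phi (c z * r) = c z * phi r"
  unfolding phi_def coord_smult by (rule linc_smult) (use coord_spec[THEN conjunct1] in auto)

lemma phi_zero: "phi 0 = 0"
  using phi_add[of 0 0] by simp

lemma phi_B: "phi (B m) = G m"
proof -
  let ?d = "\<lambda>n. if n = m then (1::complex) else 0"
  have s: "{n. ?d n \<noteq> 0} = {m}" by auto
  have "linc c B ?d = B m" unfolding linc_def s by (simp add: c1)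
  then have "coord (B m) = ?d" using coord_linc[of ?d] s by simp
  then show ?thesis unfolding phi_def linc_def s by (simp add: c1)
qed

lemma phi_sum: "finite A \<Longrightarrow> phi (\<Sum>m\<in>A. c (g m) * B (h m)) = (\<Sum>m\<in>A. c (g m) * G (h m))"
  by (induction A rule: finite_induct) (auto simp: phi_zero phi_add phi_smult phi_B)

lemma B_E: "B m * E = B (fst m, fst (snd m), Suc (snd (snd m)))"
  by (cases m) (simp add: monoFHE_def mult.assoc power_Suc2 del: power_Suc)

lemma phi_E: "phi (r * E) = c e * phi r"
proof -
  let ?a = "coord r" and ?A = "{m. coord r m \<noteq> 0}"
  have fA: "finite ?A" by (rule coord_spec[THEN conjunct1])
  have r: "r = (\<Sum>m\<in>?A. c (?a m) * B m)" using coord_spec[of r, THEN conjunct2] unfolding linc_def .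
  have "r * E = (\<Sum>m\<in>?A. c (?a m) * B (fst m, fst (snd m), Suc (snd (snd m))))"
    by (subst r) (simp add: sum_distrib_right mult.assoc B_E)
  then have "phi (r * E) = (\<Sum>m\<in>?A. c (?a m) * G (fst m, fst (snd m), Suc (snd (snd m))))"
    using phi_sum[OF fA] by simp
  also have "\<dots> = (\<Sum>m\<in>?A. c e * (c (?a m) * G m))"
  proof (rule sum.cong[OF refl])
    fix m
    have "c (?a m) * G (fst m, fst (snd m), Suc (snd (snd m)))
        = c (?a m) * (c (e * e ^ snd (snd m)) * (F ^ fst m * H ^ fst (snd m)))"
      by (simp add: G_def)
    also have "\<dots> = c (e * ?a m) * G m"
      by (simp only: G_def cc) (simp add: mult_ac)
    also have "\<dots> = c e * (c (?a m) * G m)" by (simp add: c_mult mult.assoc)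
    finally show "c (?a m) * G (fst m, fst (snd m), Suc (snd (snd m))) = c e * (c (?a m) * G m)" .
  qed
  also have "\<dots> = c e * phi r"
    by (simp add: phi_def linc_def sum_distrib_left)
  finally show ?thesis .
qed


lemma phi_subalgE: "y \<in> subalg c {E} \<Longrightarrow> phi (r * y) = c (eta y) * phi r"
proof (induction y arbitrary: r rule: subalg.induct)
  case (scal a)
  then show ?case by (simp add: c_central[symmetric] phi_smult eta_c)
next
  case (gen g)
  then show ?case by (simp add: phi_E)
next
  case (add x y)
  then show ?case by (simp add: distrib_left phi_add eta_add c_add distrib_right)
next
  case (mult x y)
  have "phi (r * (x * y)) = c (eta y) * (c (eta x) * phi r)"
    using mult.IH by (simp add: mult.assoc[symmetric])
  also have "\<dots> = c (eta (x * y)) * phi r"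
    using mult.hyps by (simp add: eta_mult cc mult.commute)
  finally show ?case .
qed

abbreviation "L \<equiv> left_ideal (ker_eta c E eta)"
abbreviation "SFH \<equiv> subalg c {F, H}"

lemma phi_L: "l \<in> L \<Longrightarrow> phi l = 0"
proof (induction rule: left_ideal.induct)
  case zero
  then show ?case by (simp add: phi_zero)
next
  case (prod y r)
  then show ?case by (simp add: ker_eta_def phi_subalgE c0)
next
  case (add x z)
  then show ?case by (simp add: phi_add)
qed

lemma span_smult: "v \<in> spanFH c F H \<Longrightarrow> c z * v \<in> spanFH c F H"
proof (induction rule: spanFH.induct)
  case sp_zero then show ?case by (simp add: spanFH.sp_zero)
next
  case (sp_mono a i j) then show ?case by (simp add: cc spanFH.sp_mono)
next
  case (sp_add x y) then show ?case by (simp add: distrib_left spanFH.sp_add)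
qed

lemma span_diff: "v \<in> spanFH c F H \<Longrightarrow> w \<in> spanFH c F H \<Longrightarrow> v - w \<in> spanFH c F H"
  using span_smult[of w "-1"] spanFH.sp_add[of v c F H "- w"] by (simp add: c_m1)

lemma span_leftF: "v \<in> spanFH c F H \<Longrightarrow> F ^ i * v \<in> spanFH c F H"
proof (induction rule: spanFH.induct)
  case sp_zero then show ?case by (simp add: spanFH.sp_zero)
next
  case (sp_mono a k j)
  have "F ^ i * (c a * (F ^ k * H ^ j)) = c a * (F ^ i * (F ^ k * H ^ j))"
    by (metis c_central mult.assoc)
  also have "\<dots> = c a * (F ^ (i + k) * H ^ j)"
    by (simp add: power_add mult.assoc)
  finally show ?case by (simp add: spanFH.sp_mono)
next
  case (sp_add x y) then show ?case by (simp add: distrib_left spanFH.sp_add)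
qed

lemma span_rightH: "v \<in> spanFH c F H \<Longrightarrow> v * H ^ l \<in> spanFH c F H"
proof (induction rule: spanFH.induct)
  case sp_zero then show ?case by (simp add: spanFH.sp_zero)
next
  case (sp_mono a k j)
  have "c a * (F ^ k * H ^ j) * H ^ l = c a * (F ^ k * H ^ (j + l))"
    by (simp add: mult.assoc power_add)
  then show ?case by (simp add: spanFH.sp_mono)
next
  case (sp_add x y) then show ?case by (simp add: distrib_right spanFH.sp_add)
qed

lemma c_of_nat: "c (of_nat k) = of_nat k"
  by (induction k) (simp_all add: c0 c_add c1)

lemma HFk: "H * F ^ k = F ^ k * H - of_nat k * F ^ k"
proof (induction k)
  case 0 then show ?case by simp
next
  case (Suc k)
  have "H * F ^ Suc k = (H * F) * F ^ k" by (simp add: mult.assoc)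
  also have "\<dots> = F * (H * F ^ k) - F * F ^ k" by (simp add: rel_HF mult.assoc left_diff_distrib)
  also have "\<dots> = F * (F ^ k * H) - F * (of_nat k * F ^ k) - F * F ^ k"
    by (simp add: Suc.IH right_diff_distrib)
  finally have a: "H * F ^ Suc k = F * (F ^ k * H) - F * (of_nat k * F ^ k) - F * F ^ k" .
  have b: "F * (of_nat k * F ^ k) = of_nat k * (F * F ^ k)"
    by (metis mult.assoc mult_of_nat_commute)
  show ?case unfolding a b by (simp add: mult.assoc algebra_simps)
qed

lemma HjFkHl: "H ^ j * F ^ k * H ^ l \<in> spanFH c F H"
proof (induction j arbitrary: l)
  case 0
  have "F ^ k * H ^ l = c 1 * (F ^ k * H ^ l)" by (simp add: c1)
  then show ?case using spanFH.sp_mono[of c 1 F k H l] by simp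
next
  case (Suc j)
  have "H ^ Suc j * F ^ k * H ^ l = H ^ j * (H * F ^ k) * H ^ l"
    by (simp add: power_Suc2 mult.assoc del: power_Suc)
  also have "\<dots> = H ^ j * (F ^ k * H) * H ^ l - H ^ j * (of_nat k * F ^ k) * H ^ l"
    by (simp add: HFk right_diff_distrib left_diff_distrib del: power_Suc)
  also have "H ^ j * (F ^ k * H) * H ^ l = H ^ j * F ^ k * H ^ Suc l"
    by (simp add: mult.assoc)
  also have "H ^ j * (of_nat k * F ^ k) * H ^ l = c (of_nat k) * (H ^ j * F ^ k * H ^ l)"
    unfolding c_of_nat by (metis mult.assoc mult_of_nat_commute)
  moreover have "H ^ j * F ^ k * H ^ Suc l - c (of_nat k) * (H ^ j * F ^ k * H ^ l) \<in> spanFH c F H"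
    by (rule span_diff[OF Suc.IH span_smult[OF Suc.IH]])
  ultimately show ?case by simp
qed

lemma span_mono_mult: "y \<in> spanFH c F H \<Longrightarrow> c a * (F ^ i * H ^ j) * y \<in> spanFH c F H"
proof (induction rule: spanFH.induct)
  case sp_zero then show ?case by (simp add: spanFH.sp_zero)
next
  case (sp_mono b k l)
  have "c a * (F ^ i * H ^ j) * (c b * (F ^ k * H ^ l)) = c a * (c b * ((F ^ i * H ^ j) * (F ^ k * H ^ l)))"
    by (metis c_central mult.assoc)
  also have "\<dots> = c a * (c b * (F ^ i * (H ^ j * F ^ k * H ^ l)))" by (simp add: mult.assoc)
  finally show ?case using HjFkHl span_leftF span_smult by simp
next
  case (sp_add x y) then show ?case by (simp add: distrib_left spanFH.sp_add)
qed

lemma span_mult: "x \<in> spanFH c F H \<Longrightarrow> y \<in> spanFH c F H \<Longrightarrow> x * y \<in> spanFH c F H"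
proof (induction rule: spanFH.induct)
  case sp_zero then show ?case by (simp add: spanFH.sp_zero)
next
  case (sp_mono a i j) then show ?case by (rule span_mono_mult)
next
  case (sp_add x z) then show ?case by (simp add: distrib_right spanFH.sp_add)
qed

lemma SFH_span: "v \<in> SFH \<Longrightarrow> v \<in> spanFH c F H"
proof (induction rule: subalg.induct)
  case (scal a)
  then show ?case using spanFH.sp_mono[of c a F 0 H 0] by simp
next
  case (gen g)
  then have "g = c 1 * (F ^ 1 * H ^ 0) \<or> g = c 1 * (F ^ 0 * H ^ 1)" by (auto simp: c1)
  then show ?case by (metis spanFH.sp_mono)
next
  case (add x y) then show ?case by (simp add: spanFH.sp_add)
next
  case (mult x y) then show ?case by (simp add: span_mult)
qed

lemma phi_span: "v \<in> spanFH c F H \<Longrightarrow> phi v = v"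
proof (induction rule: spanFH.induct)
  case sp_zero then show ?case by (simp add: phi_zero)
next
  case (sp_mono a i j)
  have "F ^ i * H ^ j = B (i, j, 0)" by (simp add: monoFHE_def)
  then show ?case by (simp add: phi_smult phi_B G_def c1)
next
  case (sp_add x y) then show ?case by (simp add: phi_add)
qed

lemma uniq0: "v \<in> SFH \<Longrightarrow> v \<in> L \<Longrightarrow> v = 0"
  using phi_span[OF SFH_span] phi_L by metis

lemma L_left: "l \<in> L \<Longrightarrow> r * l \<in> L"
proof (induction rule: left_ideal.induct)
  case zero then show ?case by (simp add: left_ideal.zero)
next
  case (prod y r') then show ?case by (metis left_ideal.prod mult.assoc)
next
  case (add x z) then show ?case by (simp add: distrib_left left_ideal.add)
qed

lemma L_diff: "l \<in> L \<Longrightarrow> k \<in> L \<Longrightarrow> l - k \<in> L"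
  using L_left[of k "-1"] left_ideal.add[of l _ "- k"] by simp

lemma SFH_smult: "v \<in> SFH \<Longrightarrow> c z * v \<in> SFH"
  by (rule subalg.mult[OF subalg.scal])

lemma SFH_diff: "v \<in> SFH \<Longrightarrow> w \<in> SFH \<Longrightarrow> v - w \<in> SFH"
  using SFH_smult[of w "-1"] subalg.add[of v c "{F,H}" "- w"] by (simp add: c_m1)

lemma SE_diff_c: "x \<in> subalg c {E} \<Longrightarrow> x - c (eta x) \<in> ker_eta c E eta"
proof -
  assume x: "x \<in> subalg c {E}"
  have eq: "x - c (eta x) = x + c (- eta x)" by (simp add: c_neg)
  have m: "x + c (- eta x) \<in> subalg c {E}" using x by (simp add: subalg.add subalg.scal)
  have "eta (x + c (- eta x)) = 0" using x by (simp add: eta_add subalg.scal eta_c)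
  then show ?thesis using m unfolding ker_eta_def eq by blast
qed

lemma Epow: "E ^ k \<in> subalg c {E} \<and> eta (E ^ k) = e ^ k"
proof (induction k)
  case 0
  have "(1::'a) = c 1" by (simp add: c1)
  then show ?case using subalg.scal[of c 1 "{E}"] eta_c[of 1] by simp
next
  case (Suc k)
  have E: "E \<in> subalg c {E}" by (simp add: subalg.gen)
  then show ?case using Suc by (simp add: subalg.mult eta_mult)
qed

lemma SFH_pow: "X \<in> SFH \<Longrightarrow> X ^ n \<in> SFH"
proof (induction n)
  case 0
  then show ?case using subalg.scal[of c 1 "{F,H}"] by (simp add: c1)
next
  case (Suc n)
  then show ?case by (simp add: subalg.mult)
qed

definition D :: "'a \<Rightarrow> bool" where "D r \<longleftrightarrow> (\<exists>v\<in>SFH. r - v \<in> L)"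

lemma D_B: "D (B m)"
proof -
  obtain i j k where m: "m = (i, j, k)" by (cases m)
  let ?v = "c (e ^ k) * (F ^ i * H ^ j)"
  have pw: "F ^ i \<in> SFH" "H ^ j \<in> SFH" for i j
    using SFH_pow[of F i] SFH_pow[of H j] by (auto intro: subalg.gen)
  have v: "?v \<in> SFH" using pw by (intro SFH_smult subalg.mult)
  have "B m - ?v = F ^ i * H ^ j * (E ^ k - c (eta (E ^ k)))"
    using Epow[of k] by (simp add: m monoFHE_def right_diff_distrib c_central mult.assoc)
  also have "\<dots> \<in> L"
    using SE_diff_c[of "E ^ k"] Epow[of k] by (intro left_ideal.prod) auto
  finally show ?thesis using v by (auto simp: D_def)
qed

lemma D_all: "D r"
proof -
  have cl: "D (\<Sum>m\<in>A. c (g m) * B m)" if "finite A" for A and g :: "_ \<Rightarrow> complex"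
    using that
  proof (induction A rule: finite_induct)
    case empty
    have "(0::'a) \<in> SFH" using subalg.scal[of c 0 "{F,H}"] by (simp add: c0)
    then show ?case by (auto simp: D_def intro!: bexI[of _ 0] left_ideal.zero)
  next
    case (insert m A)
    obtain v where v: "v \<in> SFH" "(\<Sum>m\<in>A. c (g m) * B m) - v \<in> L" using insert.IH by (auto simp: D_def)
    obtain w where w: "w \<in> SFH" "B m - w \<in> L" using D_B[of m] by (auto simp: D_def)
    have "(\<Sum>m\<in>insert m A. c (g m) * B m) - (c (g m) * w + v)
        = c (g m) * (B m - w) + ((\<Sum>m\<in>A. c (g m) * B m) - v)"
      using insert.hyps by (simp add: algebra_simps)
    also have "\<dots> \<in> L" using v w by (intro left_ideal.add L_left)
    finally show ?case using v w by (auto simp: D_def intro!: bexI[of _ "c (g m) * w + v"] subalg.add SFH_smult)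
  qed
  have eq: "r = (\<Sum>m\<in>{m. coord r m \<noteq> 0}. c (coord r m) * B m)"
    using coord_spec[of r, THEN conjunct2] unfolding linc_def .
  show ?thesis by (subst eq) (rule cl[OF coord_spec[of r, THEN conjunct1]])
qed

lemma proj_unique: "\<exists>!v. v \<in> SFH \<and> r - v \<in> L"
proof -
  obtain v where v: "v \<in> SFH" "r - v \<in> L" using D_all[of r] by (auto simp: D_def)
  have "w = v" if "w \<in> SFH" "r - w \<in> L" for w
  proof -
    have "w - v \<in> SFH" using that v by (intro SFH_diff)
    moreover have "w - v = (r - v) - (r - w)" by simp
    then have "w - v \<in> L" using that v L_diff by metis
    ultimately show ?thesis using uniq0 by fastforce
  qed
  then show ?thesis using v by blast
qed

lemma proj_eq: "v \<in> SFH \<Longrightarrow> r - v \<in> L \<Longrightarrow> eta_proj c E F H eta r = v"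
  unfolding eta_proj_def using proj_unique by (rule the1_equality) auto

lemma proj_spec: "eta_proj c E F H eta r \<in> SFH \<and> r - eta_proj c E F H eta r \<in> L"
  unfolding eta_proj_def by (rule theI'[OF proj_unique])

end

theorem mainTheorem18:
  fixes c :: "complex \<Rightarrow> 'a::ring_1" and f :: "complex poly"
    and E F H :: 'a and eta :: "'a \<Rightarrow> complex" and u x :: 'a
  assumes "R_alg c f E F H"
    and "alg_hom_on c (subalg c {E}) eta"
    and "eta E \<noteq> 0"
    and "u \<in> subalg c {F, H}"
    and "x \<in> subalg c {E}"
  shows "eta_act c E F H eta x (eta_proj c E F H eta u)
           = eta_proj c E F H eta (x * u - u * x)"
proof -
  interpret RA c f E F H eta using assms(1,2) by unfold_locales
  have pu: "eta_proj c E F H eta u = u"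
    using assms(4) by (intro proj_eq) (auto intro: left_ideal.zero)
  define v where "v = eta_proj c E F H eta (x * u)"
  have v: "v \<in> SFH" "x * u - v \<in> L" using proj_spec[of "x * u"] by (auto simp: v_def)
  have "x * u - u * x - (v - c (eta x) * u) = (x * u - v) - u * (x - c (eta x))"
    by (simp add: right_diff_distrib c_central)
  also have "\<dots> \<in> L"
    by (rule L_diff[OF v(2) left_ideal.prod[OF SE_diff_c[OF assms(5)]]])
  finally have "eta_proj c E F H eta (x * u - u * x) = v - c (eta x) * u"
    using v assms(4) by (intro proj_eq SFH_diff SFH_smult)
  then show ?thesis by (simp add: eta_act_def pu v_def)
qed

end
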